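(* Let $G$ be a chordal graph that is $1$-extendable and let $v$ be a simplicial vertex of $G$. Then $G-N[v]$ is $1$-extendable.
   Context: All graphs are finite and simple. A chordal graph is a graph with no induced cycle of length at least four. A vertex $v$ is simplicial if its neighbourhood $N(v)$ induces a complete graph; $N[v]=N(v)\cup\{v\}$. A graph is $1$-extendable if every vertex belongs to some maximum independent set. $G-N[v]$ denotes the subgraph of $G$ induced by $V(G)\setminus N[v]$. *)

theory Defs
  imports Main
begin

definition graph :: "'a set \<Rightarrow> ('a \<Rightarrow> 'a \<Rightarrow> bool) \<Rightarrow> bool" where
  "graph V E \<longleftrightarrow> finite V \<and> (\<forall>x y. E x y \<longrightarrow> x \<in> V \<and> y \<in> V)
      \<and> (\<forall>x y. E x y \<longrightarrow> E y x) \<and> (\<forall>x. \<not> E x x)"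

definition induced_edges :: "'a set \<Rightarrow> ('a \<Rightarrow> 'a \<Rightarrow> bool) \<Rightarrow> 'a \<Rightarrow> 'a \<Rightarrow> bool" where
  "induced_edges S E = (\<lambda>x y. E x y \<and> x \<in> S \<and> y \<in> S)"

definition nbhd :: "('a \<Rightarrow> 'a \<Rightarrow> bool) \<Rightarrow> 'a \<Rightarrow> 'a set" where
  "nbhd E v = {u. E v u}"

definition closed_nbhd :: "('a \<Rightarrow> 'a \<Rightarrow> bool) \<Rightarrow> 'a \<Rightarrow> 'a set" where
  "closed_nbhd E v = insert v (nbhd E v)"

definition induced_cycle :: "'a set \<Rightarrow> ('a \<Rightarrow> 'a \<Rightarrow> bool) \<Rightarrow> 'a list \<Rightarrow> bool" where
  "induced_cycle V E c \<longleftrightarrow> length c \<ge> 3 \<and> distinct c \<and> set c \<subseteq> V \<and>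
     (\<forall>i<length c. \<forall>j<length c.
        E (c ! i) (c ! j) \<longleftrightarrow> (j = (i + 1) mod length c \<or> i = (j + 1) mod length c))"

definition chordal :: "'a set \<Rightarrow> ('a \<Rightarrow> 'a \<Rightarrow> bool) \<Rightarrow> bool" where
  "chordal V E \<longleftrightarrow> (\<nexists>c. induced_cycle V E c \<and> length c \<ge> 4)"

definition simplicial :: "'a set \<Rightarrow> ('a \<Rightarrow> 'a \<Rightarrow> bool) \<Rightarrow> 'a \<Rightarrow> bool" where
  "simplicial V E v \<longleftrightarrow> v \<in> V \<and> (\<forall>x\<in>nbhd E v. \<forall>y\<in>nbhd E v. x \<noteq> y \<longrightarrow> E x y)"

definition independent_set :: "'a set \<Rightarrow> ('a \<Rightarrow> 'a \<Rightarrow> bool) \<Rightarrow> 'a set \<Rightarrow> bool" where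
  "independent_set V E I \<longleftrightarrow> I \<subseteq> V \<and> (\<forall>x\<in>I. \<forall>y\<in>I. \<not> E x y)"

definition max_independent_set :: "'a set \<Rightarrow> ('a \<Rightarrow> 'a \<Rightarrow> bool) \<Rightarrow> 'a set \<Rightarrow> bool" where
  "max_independent_set V E I \<longleftrightarrow> independent_set V E I \<and>
     (\<forall>J. independent_set V E J \<longrightarrow> card J \<le> card I)"

definition one_extendable :: "'a set \<Rightarrow> ('a \<Rightarrow> 'a \<Rightarrow> bool) \<Rightarrow> bool" where
  "one_extendable V E \<longleftrightarrow> (\<forall>v\<in>V. \<exists>I. max_independent_set V E I \<and> v \<in> I)"

end

theory Submission
  imports Defs
begin

theorem lemma4:
  fixes V :: "'a set" and E :: "'a \<Rightarrow> 'a \<Rightarrow> bool" and v :: 'a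
  assumes "graph V E"
    and "chordal V E"
    and "one_extendable V E"
    and "simplicial V E v"
  shows "one_extendable (V - closed_nbhd E v) (induced_edges (V - closed_nbhd E v) E)"
proof -
  let ?N = "closed_nbhd E v"
  let ?H = "V - ?N"
  let ?EH = "induced_edges ?H E"
  have fin: "finite V" and sym: "\<And>x y. E x y \<Longrightarrow> E y x" and inV: "\<And>x y. E x y \<Longrightarrow> x \<in> V \<and> y \<in> V"
    using assms(1) unfolding graph_def by auto
  have vV: "v \<in> V" and cl: "\<And>x y. E v x \<Longrightarrow> E v y \<Longrightarrow> x \<noteq> y \<Longrightarrow> E x y"
    using assms(4) unfolding simplicial_def nbhd_def by auto
  show ?thesis unfolding one_extendable_def
  proof
    fix u assume uH: "u \<in> ?H"
    then obtain I where I: "max_independent_set V E I" "u \<in> I"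
      using assms(3) unfolding one_extendable_def by auto
    have IV: "I \<subseteq> V" and Iind: "\<And>x y. x \<in> I \<Longrightarrow> y \<in> I \<Longrightarrow> \<not> E x y"
      and Imax: "\<And>J. independent_set V E J \<Longrightarrow> card J \<le> card I"
      using I(1) unfolding max_independent_set_def independent_set_def by auto
    have finI: "finite I" using IV fin finite_subset by auto
    let ?K = "I - ?N"
    have c1: "card (I \<inter> ?N) \<le> 1"
    proof -
      have "\<forall>x\<in>I \<inter> ?N. \<forall>y\<in>I \<inter> ?N. x = y"
      proof (intro ballI, rule ccontr)
        fix x y assume x: "x \<in> I \<inter> ?N" and y: "y \<in> I \<inter> ?N" and ne: "x \<noteq> y"
        have "E x y"
          using x y ne cl sym unfolding closed_nbhd_def nbhd_def by blast
        thus False using Iind x y by auto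
      qed
      thus ?thesis using card_le_Suc0_iff_eq[of "I \<inter> ?N"] finI by auto
    qed
    have "I \<subseteq> ?K \<union> (I \<inter> ?N)" by auto
    hence "card I \<le> card ?K + card (I \<inter> ?N)"
      proof -
      have "card I \<le> card (?K \<union> (I \<inter> ?N))" using finI \<open>I \<subseteq> ?K \<union> (I \<inter> ?N)\<close> by (intro card_mono) auto
      also have "\<dots> \<le> card ?K + card (I \<inter> ?N)" by (rule card_Un_le)
      finally show ?thesis .
    qed
    hence cI: "card I \<le> card ?K + 1" using c1 by linarith
    have "max_independent_set ?H ?EH ?K"
      unfolding max_independent_set_def
    proof (intro conjI allI impI)
      show "independent_set ?H ?EH ?K"
        using IV Iind unfolding independent_set_def induced_edges_def by auto
      fix J assume J: "independent_set ?H ?EH J"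
      have JH: "J \<subseteq> ?H" using J unfolding independent_set_def by auto
      have Jind: "\<And>x y. x \<in> J \<Longrightarrow> y \<in> J \<Longrightarrow> \<not> E x y"
        using J JH unfolding independent_set_def induced_edges_def by blast
      have finJ: "finite J" using JH fin finite_subset by auto
      have vJ: "v \<notin> J" using JH unfolding closed_nbhd_def by auto
      have "independent_set V E (insert v J)"
        unfolding independent_set_def
      proof (intro conjI ballI)
        show "insert v J \<subseteq> V" using JH vV by auto
        fix x y assume x: "x \<in> insert v J" and y: "y \<in> insert v J"
        show "\<not> E x y"
        proof
          assume e: "E x y"
          have nv: "\<And>z. z \<in> J \<Longrightarrow> \<not> E v z" using JH unfolding closed_nbhd_def nbhd_def by auto
          show False
          proof (cases "x = v")
            case True
            have irr: "\<not> E v v" using assms(1) unfolding graph_def by blast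
            then show False using True y e nv by blast
          next
            case False
            hence xJ: "x \<in> J" using x by auto
            show False
            proof (cases "y = v")
              case True
              then show False using xJ e nv sym by metis
            next
              case False
              then show False using xJ y e Jind by auto
            qed
          qed
        qed
      qed
      hence "card (insert v J) \<le> card I" by (rule Imax)
      hence "card J + 1 \<le> card I" using finJ vJ by simp
      thus "card J \<le> card ?K" using cI by linarith
    qed
    moreover have "u \<in> ?K" using uH I(2) by auto
    ultimately show "\<exists>I. max_independent_set ?H ?EH I \<and> u \<in> I" by blast
  qed
qed

end
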